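(* For $c>0$ and $t\ge 0$ let $$l(c,t)=\begin{cases}\dfrac{t}{t+1}\log c+\dfrac t2, & c\ge 1,\\[2mm] \dfrac{ct}{2}, & 0<c\le 1,\end{cases}\qquad u(c,t)=\min\Big\{\log\Big(c+\frac{1}{4c}\Big)+\frac t2,\ \log(1+ct)+c(e^t-1)\Big\}.$$ Then for all $t>0$ and $c>0$, $$l(c,t)<\log\Big(1+2c\sinh\frac t2\Big)\le u(c,t).$$ Moreover, for $t>0$ and $c>0$, equality holds in the upper bound if and only if $c>\frac12$ and $t=2\log(2c)$. *)

theory Defs
  imports Complex_Main
begin

text \<open>Lower bound l(c,t) (defined for c > 0, t \<ge> 0; both branches agree at c = 1).\<close>
definition lbound :: "real \<Rightarrow> real \<Rightarrow> real" where
  "lbound c t = (if c \<ge> 1 then t / (t + 1) * ln c + t / 2 else c * t / 2)"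

definition ubound :: "real \<Rightarrow> real \<Rightarrow> real" where
  "ubound c t = min (ln (c + 1 / (4 * c)) + t / 2) (ln (1 + c * t) + c * (exp t - 1))"

end

theory Submission
  imports Defs "HOL-Analysis.Analysis"
begin

theorem lemma3p8:
  fixes c t :: real
  assumes "t > 0" and "c > 0"
  shows "lbound c t < ln (1 + 2 * c * sinh (t / 2))
         \<and> ln (1 + 2 * c * sinh (t / 2)) \<le> ubound c t
         \<and> (ln (1 + 2 * c * sinh (t / 2)) = ubound c t \<longleftrightarrow> c > 1 / 2 \<and> t = 2 * ln (2 * c))"
proof -
  have t: "t > 0" and c: "c > 0" using assms by auto
  define x where "x = exp (t/2)"
  have x1: "x > 1" unfolding x_def using t by simp
  have xt: "exp t = x^2" unfolding x_def by (simp add: power2_eq_square flip: exp_add)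
  have ex: "exp (-(t/2)) = 1/x" unfolding x_def by (simp add: exp_minus field_simps)
  have lnx: "ln x = t/2" unfolding x_def by simp
  define A where "A = 1 + 2 * c * sinh (t / 2)"
  have A: "A = 1 + c * (x - 1/x)" unfolding A_def sinh_def x_def[symmetric] ex by simp
  have xpos: "x > 0" using x1 by simp
  have "1 * 1 < x * x" using x1 by (intro mult_strict_mono) auto
  then have xx: "1/x < x" using x1 xpos by (simp add: divide_less_eq)
  have Apos: "A > 1" unfolding A using xx c by simp
  have cp: "c + 1/(4*c) > 0" using c by (simp add: add_pos_pos)
  have u1eq: "ln (c + 1 / (4 * c)) + t / 2 = ln ((c + 1/(4*c)) * x)"
    using cp xpos by (simp add: ln_mult lnx)
  have key1: "(c + 1/(4*c)) * x - A = (x - 2*c)^2 / (4*c*x)"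
    unfolding A using c xpos by (simp add: field_simps power2_eq_square)
  have B1: "A \<le> (c + 1/(4*c)) * x"
  proof -
    have "(x - 2*c)^2 / (4*c*x) \<ge> 0" using c xpos by simp
    then show ?thesis using key1 by simp
  qed
  have B1eq: "A = (c + 1/(4*c)) * x \<longleftrightarrow> x = 2*c"
  proof
    assume "A = (c + 1/(4*c)) * x"
    then have "(x - 2*c)^2 / (4*c*x) = 0" using key1 by simp
    then show "x = 2*c" using c xpos by simp
  next
    assume "x = 2*c"
    then show "A = (c + 1/(4*c)) * x" using key1 by simp
  qed
  have L1: "ln A \<le> ln (c + 1 / (4 * c)) + t / 2"
    unfolding u1eq using B1 Apos by simp
  have L1eq: "ln A = ln (c + 1 / (4 * c)) + t / 2 \<longleftrightarrow> x = 2*c"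
  proof -
    have "(c + 1/(4*c)) * x > 0" using cp xpos by simp
    then show ?thesis unfolding u1eq using Apos B1eq by simp
  qed
  have L2: "ln A < ln (1 + c * t) + c * (exp t - 1)"
  proof -
    have "ln A \<le> A - 1" using Apos by (intro ln_le_minus_one) simp
    also have "A - 1 < c * (exp t - 1)"
    proof -
      have "x^2 - 1 - (x - 1/x) = (x-1)^2*(x+1)/x"
        using xpos by (simp add: field_simps power2_eq_square)
      also have "\<dots> > 0" using x1 by simp
      finally have "x - 1/x < x^2 - 1" by simp
      then show ?thesis unfolding A xt using c by simp
    qed
    also have "\<dots> \<le> ln (1 + c * t) + c * (exp t - 1)"
      using c t by simp
    finally show ?thesis .
  qed
  have U: "ln A \<le> ubound c t" unfolding ubound_def using L1 L2 by simp
  have Ueq: "ln A = ubound c t \<longleftrightarrow> x = 2*c"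
    unfolding ubound_def using L1 L2 L1eq by (auto simp: min_def)
  have xeq: "x = 2*c \<longleftrightarrow> c > 1/2 \<and> t = 2 * ln (2*c)"
  proof
    assume h: "x = 2*c"
    then have "c > 1/2" using x1 by simp
    moreover have "t = 2 * ln (2*c)" using lnx h by simp
    ultimately show "c > 1/2 \<and> t = 2 * ln (2*c)" by simp
  next
    assume "c > 1/2 \<and> t = 2 * ln (2*c)"
    then show "x = 2*c" unfolding x_def using c by simp
  qed
  have Lw: "lbound c t < ln A"
  proof (cases "c \<ge> 1")
    case True
    define s where "s = t/(t+1)"
    have s0: "0 \<le> s" "s \<le> 1" unfolding s_def using t by auto
    have "c powr s * 1 powr (1-s) \<le> s*c + (1-s)*1"
      using s0 c by (intro Youngs_inequality_0) auto
    then have cs: "c powr s \<le> s*c + (1-s)" by simp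
    have "lbound c t = ln (c powr s * x)"
      unfolding lbound_def s_def using True c xpos by (simp add: ln_mult ln_powr lnx)
    also have "\<dots> < ln A"
    proof -
      have "c powr s * x \<le> (s*c + (1-s)) * x" using cs xpos by (simp add: mult_right_mono)
      also have "\<dots> < A"
      proof -
        have e: "1 + t \<le> x^2" using exp_ge_add_one_self[of t] xt by simp
        have p1: "(t+1)*(x-1) > 0" using t x1 by simp
        have p2: "(c-1)*(x^2 - (t+1)) \<ge> 0" using e True by simp
        have poly: "(t*c+1)*x^2 < (t+1)*(x + c*x^2 - c)"
          using p1 p2 by (simp add: algebra_simps power2_eq_square)
        have t1: "t + 1 \<noteq> 0" using t by simp
        have s1: "s*c + (1-s) = (t*c+1)/(t+1)"
          unfolding s_def using t1 by (simp add: field_simps)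
        have sx: "(s*c + (1-s)) * x = (t*c+1)*x^2 / ((t+1)*x)"
          unfolding s1 using xpos by (simp add: power2_eq_square)
        have A0: "A = (x + c*x^2 - c) / x"
          unfolding A using xpos by (simp add: field_simps power2_eq_square)
        have Ax: "A = (t+1)*(x + c*x^2 - c) / ((t+1)*x)"
          unfolding A0 using t1 by simp
        have "(t+1)*x > 0" using t xpos by simp
        then have "(t*c+1)*x^2 / ((t+1)*x) < (t+1)*(x + c*x^2 - c) / ((t+1)*x)"
          using poly by (rule divide_strict_right_mono[rotated])
        then show ?thesis unfolding sx Ax .
      qed
      finally show ?thesis using c xpos Apos by simp
    qed
    finally show ?thesis .
  next
    case False
    have "x powr c * 1 powr (1-c) \<le> c*x + (1-c)*1"
      using False c xpos by (intro Youngs_inequality_0) auto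
    then have xc: "x powr c \<le> c*x + (1-c)" by simp
    have "lbound c t = ln (x powr c)"
      unfolding lbound_def using False xpos by (simp add: ln_powr lnx)
    also have "\<dots> < ln A"
    proof -
      have "1/x < 1" using x1 by simp
      then have "c*(1/x) < c*1" using c by (intro mult_strict_left_mono) auto
      then have "c*x + (1-c) < A" unfolding A by (simp add: algebra_simps)
      then have "x powr c < A" using xc by linarith
      moreover have "x powr c > 0" using xpos by simp
      ultimately show ?thesis using Apos by (subst ln_less_cancel_iff) auto
    qed
    finally show ?thesis .
  qed
  show ?thesis using Lw U Ueq xeq unfolding A_def by simp
qed

end
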